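(* Let $N\ge 1$ and $m\ge 1$ be integers, let $\Delta\ge 1$ and $K\ge 1$ be reals, and suppose $2^m\le N/(K\Delta)$. Then there is a set $\mathcal{Y}\subseteq(\{0,1\}^m)^N$ whose entropy deficiency is at most $\Delta$ and whose min-entropy rate is at least $1-1/m$, such that for every $I\subseteq[N]$ with $|I|\le (K-1)\Delta$, the set $\mathrm{IND}_m^{[N]\setminus I}([m]^N,\mathcal{Y})$ does not contain the all-$0$ string.
   Context: The Index function $\mathrm{IND}_m:[m]\times\{0,1\}^m\to\{0,1\}$ is $\mathrm{IND}_m(x,y)=y_x$. For $\mathcal{A}\subseteq[m]^N$, $\mathcal{B}\subseteq(\{0,1\}^m)^N$ and $J\subseteq[N]$, $\mathrm{IND}_m^J(\mathcal{A},\mathcal{B})\subseteq\{0,1\}^J$ denotes the set of all vectors $(\mathrm{IND}_m(x_i,y_i))_{i\in J}$ with $x\in\mathcal{A}$, $y\in\mathcal{B}$. A set $\mathcal{S}\subseteq U^N$ is identified with the uniform distribution on it. The entropy deficiency of a distribution $\mathcal{D}$ on a finite universe $V$ is $\log_2|V|-H(\mathcal{D})$, where $H$ is Shannon entropy; for a set $\mathcal{Y}\subseteq(\{0,1\}^m)^N$ this is $mN-\log_2|\mathcal{Y}|$. The min-entropy rate of a distribution $\mathcal{D}$ on $U^N$ is the largest $\tau$ such that for every $J\subseteq[N]$ and every $\alpha_J\in U^J$, $\Pr_{x\sim\mathcal{D}}[x_J=\alpha_J]\le |U|^{-\tau|J|}$ (here $U=\{0,1\}^m$, $|U|=2^m$).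 *)

theory Defs
  imports Complex_Main
begin

text \<open>Conventions (0-based indices):
  [N] = {0..<N}, [m] = {0..<m}.
  An element of {0,1}^m is a function v :: nat => bool with v j = False for j >= m.
  An element of U^N (U = {0,1}^m) is y :: nat => nat => bool with y i in U for i < N
  and y i = (\<lambda>_. False) for i >= N.
  An element of [m]^N is x :: nat => nat with x i < m for i < N and x i = 0 for i >= N.
  A vector in {0,1}^J is a function nat => bool that is False outside J.\<close>

definition bits :: "nat \<Rightarrow> (nat \<Rightarrow> bool) set" where
  "bits m = {v. \<forall>j. m \<le> j \<longrightarrow> \<not> v j}"

definition block_vecs :: "nat \<Rightarrow> nat \<Rightarrow> (nat \<Rightarrow> nat \<Rightarrow> bool) set" where
  "block_vecs m N = {y. (\<forall>i<N. y i \<in> bits m) \<and> (\<forall>i. N \<le> i \<longrightarrow> y i = (\<lambda>_. False))}"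

definition index_vecs :: "nat \<Rightarrow> nat \<Rightarrow> (nat \<Rightarrow> nat) set" where
  "index_vecs m N = {x. (\<forall>i<N. x i < m) \<and> (\<forall>i. N \<le> i \<longrightarrow> x i = 0)}"

definition IND :: "nat \<Rightarrow> (nat \<Rightarrow> bool) \<Rightarrow> bool" where
  "IND x y = y x"

definition IND_set :: "nat set \<Rightarrow> (nat \<Rightarrow> nat) set \<Rightarrow> (nat \<Rightarrow> nat \<Rightarrow> bool) set \<Rightarrow> (nat \<Rightarrow> bool) set" where
  "IND_set J A B = {(\<lambda>i. if i \<in> J then IND (x i) (y i) else False) | x y. x \<in> A \<and> y \<in> B}"

text \<open>Entropy deficiency of (the uniform distribution on) a set Y of (\{0,1\}^m)^N.\<close>
definition entropy_deficiency :: "nat \<Rightarrow> nat \<Rightarrow> (nat \<Rightarrow> nat \<Rightarrow> bool) set \<Rightarrow> real" where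
  "entropy_deficiency m N Y = real m * real N - log 2 (real (card Y))"

text \<open>tau is an admissible min-entropy rate of the uniform distribution on Y:
  for all J \<subseteq> [N] and all alpha in U^J, Pr[y_J = alpha] \<le> |U|^(-tau |J|).\<close>
definition min_entropy_rate_at_least :: "nat \<Rightarrow> nat \<Rightarrow> (nat \<Rightarrow> nat \<Rightarrow> bool) set \<Rightarrow> real \<Rightarrow> bool" where
  "min_entropy_rate_at_least m N Y \<tau> \<longleftrightarrow>
     (\<forall>J \<subseteq> {..<N}. \<forall>\<alpha>. (\<forall>i\<in>J. \<alpha> i \<in> bits m) \<longrightarrow>
        real (card {y \<in> Y. \<forall>i\<in>J. y i = \<alpha> i}) / real (card Y)
          \<le> (2 ^ m) powr (- \<tau> * real (card J)))"

end

theory Submission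
  imports Defs
begin


lemma choose_step: "a < n \<Longrightarrow> (n choose (Suc a)) * Suc a = (n choose a) * (n - a)"
  by (metis Suc_times_binomial binomial_absorb_comp mult.commute Suc_diff_1 less_nat_zero_code not_gr_zero)

lemma cstep:
  fixes n r a :: nat
  assumes "a < n"
  shows "real (n choose Suc a) * real r ^ (n - Suc a) * real (Suc a) * real r
       = real (n choose a) * real r ^ (n - a) * real (n - a)"
proof -
  have e: "n - a = Suc (n - Suc a)" using assms by simp
  have h: "real (n choose Suc a) * real (Suc a) = real (n choose a) * real (n - a)"
    using choose_step[OF assms] by (metis of_nat_mult)
  have p: "real r ^ (n - a) = real r ^ (n - Suc a) * real r" unfolding e by simp
  have "real (n choose Suc a) * real r ^ (n - Suc a) * real (Suc a) * real r
     = (real (n choose Suc a) * real (Suc a)) * (real r ^ (n - Suc a) * real r)" by (simp only: ac_simps)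
  also have "\<dots> = real (n choose a) * real (n - a) * (real r ^ (n - Suc a) * real r)" using h by simp
  finally show ?thesis unfolding p by (simp only: ac_simps)
qed

lemma keyineq:
  fixes M k r x :: real
  assumes "r \<ge> 1" "M \<ge> k * r" "0 \<le> x" "x + 1 < k"
  shows "(k - 1 - x) * (k + 1 + x) * r^2 \<le> (M - x) * (M + 2 + x)"
proof -
  have "(k - 1 - x) * (k + 1 + x) * r^2 = (k*r)^2 - ((x+1)*r)^2" by (simp add: algebra_simps power2_eq_square)
  also have "\<dots> \<le> (k*r)^2 - (x+1)^2" using assms
    by (intro diff_left_mono) (simp add: power_mult_distrib mult_le_cancel_left1 power_increasing one_le_power)
  also have "\<dots> \<le> (M+1)^2 - (x+1)^2" using assms
    by (intro diff_right_mono power_mono) (auto intro: mult_nonneg_nonneg)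
  also have "\<dots> = (M - x) * (M + 2 + x)" by (simp add: algebra_simps power2_eq_square)
  finally show ?thesis .
qed

lemma pairing:
  fixes n k r :: nat
  assumes r: "r \<ge> 1" and nk: "k * (r + 1) \<le> n"
  defines "c \<equiv> \<lambda>a. real (n choose a) * real r ^ (n - a)"
  shows "i < k \<Longrightarrow> c (k - 1 - i) \<le> c (k + i)"
proof (induction i)
  case 0
  have "k \<le> k * (r + 1)" by simp
  then have kn: "k - 1 < n" using 0 nk by linarith
  have eq: "c k * real k * real r = c (k - 1) * real (n - (k - 1))"
    using cstep[OF kn, of r] 0 unfolding c_def by simp
  have big: "real (n - (k - 1)) \<ge> real k * real r"
  proof -
    have "k * r + k \<le> n" using nk by (simp add: algebra_simps)
    then have "k * r \<le> n - (k - 1)" by linarith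
    then show ?thesis by (metis of_nat_le_iff of_nat_mult)
  qed
  have pos: "c (k - 1) \<ge> 0" "c k \<ge> 0" unfolding c_def by auto
  have "c (k - 1) * (real k * real r) \<le> c (k-1) * real (n - (k - 1))"
    by (rule mult_left_mono[OF big pos(1)])
  also have "\<dots> = c k * (real k * real r)" using eq by (simp add: algebra_simps)
  finally have "c (k - 1) * (real k * real r) \<le> c k * (real k * real r)" .
  moreover have "real k * real r > 0" using 0 r by simp
  ultimately have "c (k - 1) \<le> c k" by (rule mult_right_le_imp_le)
  then show ?case by simp
next
  case (Suc i)
  define a where "a = k - 2 - i"
  have ik: "i + 1 < k" using Suc by simp
  have "k * 2 \<le> k * (r + 1)" using r by (intro mult_le_mono2) simp
  then have k2n: "2 * k \<le> n" using nk by linarith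
  have an: "a < n" using ik k2n unfolding a_def by linarith
  have kin: "k + i < n" using ik k2n by linarith
  have a1: "Suc a = k - 1 - i" using ik unfolding a_def by linarith
  have IH: "c (Suc a) \<le> c (k + i)" using Suc ik a1 by simp
  have e1: "c (Suc a) * real (Suc a) * real r = c a * real (n - a)"
    unfolding c_def by (rule cstep[OF an])
  have e2: "c (Suc (k + i)) * real (Suc (k + i)) * real r = c (k + i) * real (n - (k + i))"
    unfolding c_def by (rule cstep[OF kin])
  have pos: "\<And>a. c a \<ge> 0" unfolding c_def by auto
  have "n - a = (n - k) + 2 + i" using ik k2n unfolding a_def by linarith
  then have na: "real (n - a) = real (n - k) + 2 + real i" by simp
  have "n - (k + i) + i = n - k" using kin by linarith
  then have "real (n - (k + i)) + real i = real (n - k)" by (metis of_nat_add)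
  then have nki: "real (n - (k + i)) = real (n - k) - real i" by linarith
  have "Suc a + 1 + i = k" using ik unfolding a_def by linarith
  then have "real (Suc a) + 1 + real i = real k" by (metis of_nat_add of_nat_1)
  then have sa: "real (Suc a) = real k - 1 - real i" by linarith
  have M: "real (n - k) \<ge> real k * real r"
  proof -
    have "k * r + k \<le> n" using nk by (simp add: algebra_simps)
    then have "k * r \<le> n - k" by linarith
    then show ?thesis by (metis of_nat_le_iff of_nat_mult)
  qed
  have ki: "real i + 1 < real k" using ik by linarith
  have key: "(real k - 1 - real i) * (real k + 1 + real i) * (real r)^2 \<le> (real (n - k) - real i) * (real (n - k) + 2 + real i)"
    by (rule keyineq) (use r M ki in auto)
  have "c a * real (n - a) * (real (Suc (k + i)) * real r) = c (Suc a) * real (Suc a) * real r * (real (Suc (k + i)) * real r)"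
    using e1 by simp
  also have "\<dots> \<le> c (k + i) * real (Suc a) * real r * (real (Suc (k + i)) * real r)"
    by (intro mult_right_mono IH) (auto simp: pos)
  also have "\<dots> = c (k + i) * ((real k - 1 - real i) * (real k + 1 + real i) * (real r)^2)"
    unfolding sa by (simp add: algebra_simps power2_eq_square)
  also have "\<dots> \<le> c (k + i) * ((real (n - k) - real i) * (real (n - k) + 2 + real i))"
    by (intro mult_left_mono key pos)
  also have "\<dots> = c (k + i) * real (n - (k + i)) * real (n - a)"
    unfolding na nki by simp
  also have "\<dots> = (c (Suc (k + i)) * real (Suc (k + i)) * real r) * real (n - a)"
    by (simp only: e2)
  also have "\<dots> = c (Suc (k + i)) * real (n - a) * (real (Suc (k + i)) * real r)"
    by (simp only: ac_simps)
  finally have "c a * (real (n - a) * (real (Suc (k + i)) * real r)) \<le> c (Suc (k + i)) * (real (n - a) * (real (Suc (k + i)) * real r))"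
    by (simp add: algebra_simps)
  moreover have "real (n - a) * (real (Suc (k + i)) * real r) > 0" using an r by simp
  ultimately have "c a \<le> c (Suc (k + i))" by (rule mult_right_le_imp_le)
  moreover have "k - 1 - Suc i = a" unfolding a_def by simp
  ultimately show ?case by simp
qed

lemma median:
  fixes n k r :: nat
  assumes r: "r \<ge> 1" and nk: "k * (r + 1) \<le> n"
  shows "(\<Sum>a<k. real (n choose a) * real r ^ (n - a)) \<le> (\<Sum>a\<in>{k..n}. real (n choose a) * real r ^ (n - a))"
proof -
  define c where "c = (\<lambda>a. real (n choose a) * real r ^ (n - a))"
  have "k * 2 \<le> k * (r + 1)" using r by (intro mult_le_mono2) simp
  then have k2n: "2 * k \<le> n" using nk by linarith
  have "(\<Sum>a<k. c a) = (\<Sum>i<k. c (k - Suc i))" by (rule sum.nat_diff_reindex[symmetric])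
  also have "\<dots> \<le> (\<Sum>i<k. c (k + i))"
  proof (rule sum_mono)
    fix i assume "i \<in> {..<k}"
    then have "i < k" by simp
    from pairing[OF r nk this] show "c (k - Suc i) \<le> c (k + i)" unfolding c_def by simp
  qed
  also have "\<dots> = (\<Sum>a\<in>{k..<k+k}. c a)"
  proof -
    have "(\<Sum>a\<in>{0+k..<k+k}. c a) = (\<Sum>i\<in>{0..<k}. c (i + k))" by (rule sum.shift_bounds_nat_ivl)
    then show ?thesis by (simp add: atLeast0LessThan ac_simps)
  qed
  also have "\<dots> \<le> (\<Sum>a\<in>{k..n}. c a)"
  proof (rule sum_mono2)
    show "finite {k..n}" by simp
    show "{k..<k + k} \<subseteq> {k..n}" using k2n by auto
    show "\<And>b. b \<in> {k..n} - {k..<k + k} \<Longrightarrow> 0 \<le> c b" unfolding c_def by simp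
  qed
  finally show ?thesis unfolding c_def .
qed


definition funs :: "nat \<Rightarrow> (nat \<Rightarrow> 'a set) \<Rightarrow> 'a \<Rightarrow> (nat \<Rightarrow> 'a) set" where
  "funs n B d = {f. (\<forall>i<n. f i \<in> B i) \<and> (\<forall>i. n \<le> i \<longrightarrow> f i = d)}"

lemma funs_0: "funs 0 B d = {\<lambda>_. d}"
  unfolding funs_def by auto

lemma funs_Suc: "funs (Suc n) B d = (\<lambda>(f, b). f(n := b)) ` (funs n B d \<times> B n)"
proof
  show "funs (Suc n) B d \<subseteq> (\<lambda>(f, b). f(n := b)) ` (funs n B d \<times> B n)"
  proof
    fix g assume g: "g \<in> funs (Suc n) B d"
    have "g = (\<lambda>(f, b). f(n := b)) (g(n := d), g n)" by simp
    moreover have "(g(n := d), g n) \<in> funs n B d \<times> B n"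
      using g unfolding funs_def by auto
    ultimately show "g \<in> (\<lambda>(f, b). f(n := b)) ` (funs n B d \<times> B n)" by blast
  qed
  show "(\<lambda>(f, b). f(n := b)) ` (funs n B d \<times> B n) \<subseteq> funs (Suc n) B d"
    unfolding funs_def by (auto simp: less_Suc_eq)
qed

lemma funs_inj: "inj_on (\<lambda>(f, b). f(n := b)) (funs n B d \<times> B n)"
proof (rule inj_onI, clarify)
  fix f b f' b'
  assume f: "f \<in> funs n B d" and f': "f' \<in> funs n B d" and eq: "f(n := b) = f'(n := b')"
  have "b = b'" using fun_cong[OF eq, of n] by simp
  moreover have "f = f'"
  proof
    fix i show "f i = f' i"
    proof (cases "i = n")
      case True then show ?thesis using f f' unfolding funs_def by auto
    next
      case False then show ?thesis using fun_cong[OF eq, of i] by simp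
    qed
  qed
  ultimately show "f = f' \<and> b = b'" by simp
qed

lemma funs_card:
  assumes "\<forall>i<n. finite (B i)"
  shows "finite (funs n B d) \<and> card (funs n B d) = (\<Prod>i<n. card (B i))"
  using assms
proof (induction n)
  case 0 then show ?case by (simp add: funs_0)
next
  case (Suc n)
  then have IH: "finite (funs n B d)" "card (funs n B d) = (\<Prod>i<n. card (B i))" by auto
  have fB: "finite (B n)" using Suc.prems by simp
  show ?case unfolding funs_Suc
    using IH fB card_image[OF funs_inj[of n B d]] by (simp add: card_cartesian_product)
qed

definition ones :: "nat \<Rightarrow> nat \<Rightarrow> bool" where "ones m = (\<lambda>j. j < m)"

lemma bits_funs: "bits m = funs m (\<lambda>_. UNIV) False"
  unfolding bits_def funs_def by auto

lemma bits_card: "finite (bits m)" "card (bits m) = 2 ^ m"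
  using funs_card[of m "\<lambda>_. UNIV :: bool set" False] unfolding bits_funs by auto

lemma ones_bits: "ones m \<in> bits m"
  unfolding ones_def bits_def by simp

lemma block_funs: "block_vecs m N = funs N (\<lambda>_. bits m) (\<lambda>_. False)"
  unfolding block_vecs_def funs_def by auto

lemma block_card: "finite (block_vecs m N)" "card (block_vecs m N) = 2 ^ (m * N)"
  using funs_card[of N "\<lambda>_. bits m" "\<lambda>_. False"] bits_card unfolding block_funs
  by (auto simp: power_mult)

lemma fixed_card:
  assumes J: "J \<subseteq> {..<N}" and al: "\<forall>i\<in>J. \<alpha> i \<in> bits m"
  shows "card {y \<in> block_vecs m N. \<forall>i\<in>J. y i = \<alpha> i} = 2 ^ (m * (N - card J))"
proof -
  define B where "B = (\<lambda>i. if i \<in> J then {\<alpha> i} else bits m)"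
  have eq: "{y \<in> block_vecs m N. \<forall>i\<in>J. y i = \<alpha> i} = funs N B (\<lambda>_. False)"
    using J al unfolding block_vecs_def funs_def B_def by auto
  have fin: "\<forall>i<N. finite (B i)" unfolding B_def using bits_card by auto
  have "(\<Prod>i<N. card (B i)) = (\<Prod>i\<in>{..<N} - J. 2 ^ m)"
  proof -
    have "(\<Prod>i<N. card (B i)) = (\<Prod>i\<in>{..<N}. if i \<in> J then 1 else 2 ^ m)"
      unfolding B_def using bits_card by (intro prod.cong) auto
    also have "\<dots> = (\<Prod>i\<in>{..<N} - J. 2 ^ m)"
      by (simp add: prod.If_cases Diff_eq)
    finally show ?thesis .
  qed
  also have "\<dots> = 2 ^ (m * (N - card J))"
    using J by (simp add: card_Diff_subset finite_subset power_mult)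
  finally show ?thesis using funs_card[OF fin, of "\<lambda>_. False"] eq by simp
qed

definition cnt :: "nat \<Rightarrow> nat \<Rightarrow> (nat \<Rightarrow> nat \<Rightarrow> bool) \<Rightarrow> nat" where
  "cnt m N y = card {i. i < N \<and> y i = ones m}"

lemma piece_card:
  assumes S: "S \<subseteq> {..<N}"
  shows "finite {y \<in> block_vecs m N. {i. i < N \<and> y i = ones m} = S}"
    "card {y \<in> block_vecs m N. {i. i < N \<and> y i = ones m} = S} = (2 ^ m - 1) ^ (N - card S)"
proof -
  define B where "B = (\<lambda>i. if i \<in> S then {ones m} else bits m - {ones m})"
  have eq: "{y \<in> block_vecs m N. {i. i < N \<and> y i = ones m} = S} = funs N B (\<lambda>_. False)"
  proof (rule set_eqI)
    fix y
    show "y \<in> {y \<in> block_vecs m N. {i. i < N \<and> y i = ones m} = S} \<longleftrightarrow> y \<in> funs N B (\<lambda>_. False)"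
      using S ones_bits[of m] unfolding block_vecs_def funs_def B_def by (auto split: if_splits)
  qed
  have fin: "\<forall>i<N. finite (B i)" unfolding B_def using bits_card by auto
  have "(\<Prod>i<N. card (B i)) = (\<Prod>i\<in>{..<N}. if i \<in> S then 1 else 2 ^ m - 1)"
    unfolding B_def using bits_card ones_bits by (intro prod.cong) auto
  also have "\<dots> = (\<Prod>i\<in>{..<N} - S. 2 ^ m - 1)"
    by (simp add: prod.If_cases Diff_eq)
  also have "\<dots> = (2 ^ m - 1) ^ (N - card S)"
    using S by (simp add: card_Diff_subset finite_subset)
  finally show "card {y \<in> block_vecs m N. {i. i < N \<and> y i = ones m} = S} = (2 ^ m - 1) ^ (N - card S)"
    using funs_card[OF fin, of "\<lambda>_. False"] eq by simp
  show "finite {y \<in> block_vecs m N. {i. i < N \<and> y i = ones m} = S}"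
    using funs_card[OF fin, of "\<lambda>_. False"] eq by simp
qed

lemma E_card:
  "card {y \<in> block_vecs m N. cnt m N y = a} = (N choose a) * (2 ^ m - 1) ^ (N - a)"
proof -
  define P where "P = (\<lambda>S. {y \<in> block_vecs m N. {i. i < N \<and> y i = ones m} = S})"
  define Ix where "Ix = {S. S \<subseteq> {..<N} \<and> card S = a}"
  have eq: "{y \<in> block_vecs m N. cnt m N y = a} = (\<Union>S\<in>Ix. P S)"
    unfolding P_def Ix_def cnt_def by auto
  have finI: "finite Ix" unfolding Ix_def by simp
  have "card (\<Union>S\<in>Ix. P S) = (\<Sum>S\<in>Ix. card (P S))"
    by (rule card_UN_disjoint) (use finI piece_card in \<open>auto simp: P_def Ix_def\<close>)
  also have "\<dots> = (\<Sum>S\<in>Ix. (2 ^ m - 1) ^ (N - a))"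
    by (rule sum.cong) (auto simp: P_def Ix_def piece_card)
  also have "\<dots> = (N choose a) * (2 ^ m - 1) ^ (N - a)"
    using n_subsets[of "{..<N}" a] unfolding Ix_def by simp
  finally show ?thesis using eq by simp
qed

lemma cnt_le: "cnt m N y \<le> N"
proof -
  have "cnt m N y \<le> card {..<N}" unfolding cnt_def by (rule card_mono) auto
  then show ?thesis by simp
qed

lemma main_count:
  assumes m: "m \<ge> 1" and kN: "k * 2 ^ m \<le> N"
  shows "2 ^ (m * N) \<le> 2 * card {y \<in> block_vecs m N. k \<le> cnt m N y}"
proof -
  define r where "r = 2 ^ m - (1::nat)"
  have "2 ^ 1 \<le> (2::nat) ^ m" by (rule power_increasing[OF m]) simp
  then have r1: "r \<ge> 1" unfolding r_def by simp
  have rr: "r + 1 = 2 ^ m" unfolding r_def by simp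
  define E where "E = (\<lambda>a. {y \<in> block_vecs m N. cnt m N y = a})"
  have finE: "\<And>a. finite (E a)" unfolding E_def using block_card(1) by simp
  have Y: "{y \<in> block_vecs m N. k \<le> cnt m N y} = (\<Union>a\<in>{k..N}. E a)"
    unfolding E_def using cnt_le by auto
  have Yc: "{y \<in> block_vecs m N. cnt m N y < k} = (\<Union>a\<in>{..<k}. E a)"
    unfolding E_def by auto
  have disj: "\<And>A. \<forall>a\<in>A. \<forall>b\<in>A. a \<noteq> b \<longrightarrow> E a \<inter> E b = {}" unfolding E_def by auto
  have cardE: "\<And>a. card (E a) = (N choose a) * r ^ (N - a)" unfolding E_def r_def by (rule E_card)
  have cY: "card {y \<in> block_vecs m N. k \<le> cnt m N y} = (\<Sum>a\<in>{k..N}. (N choose a) * r ^ (N - a))"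
  proof -
    have "card (\<Union>a\<in>{k..N}. E a) = (\<Sum>a\<in>{k..N}. card (E a))"
      by (rule card_UN_disjoint) (simp, use finE disj in blast, use disj in blast)
    then show ?thesis unfolding Y cardE .
  qed
  have cYc: "card {y \<in> block_vecs m N. cnt m N y < k} = (\<Sum>a<k. (N choose a) * r ^ (N - a))"
  proof -
    have "card (\<Union>a\<in>{..<k}. E a) = (\<Sum>a\<in>{..<k}. card (E a))"
      by (rule card_UN_disjoint) (simp, use finE disj in blast, use disj in blast)
    then show ?thesis unfolding Yc cardE .
  qed
  have tot: "card {y \<in> block_vecs m N. k \<le> cnt m N y} + card {y \<in> block_vecs m N. cnt m N y < k} = 2 ^ (m * N)"
  proof -
    have "block_vecs m N = {y \<in> block_vecs m N. k \<le> cnt m N y} \<union> {y \<in> block_vecs m N. cnt m N y < k}" by auto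
    then have "card (block_vecs m N) = card ({y \<in> block_vecs m N. k \<le> cnt m N y} \<union> {y \<in> block_vecs m N. cnt m N y < k})" by simp
    also have "\<dots> = card {y \<in> block_vecs m N. k \<le> cnt m N y} + card {y \<in> block_vecs m N. cnt m N y < k}"
      by (rule card_Un_disjoint) (use block_card(1) in auto)
    finally show ?thesis using block_card(2) by simp
  qed
  have "real (\<Sum>a<k. (N choose a) * r ^ (N - a)) \<le> real (\<Sum>a\<in>{k..N}. (N choose a) * r ^ (N - a))"
  proof -
    have "k * (r + 1) \<le> N" using kN rr by simp
    from median[OF r1 this] show ?thesis by simp
  qed
  then have "card {y \<in> block_vecs m N. cnt m N y < k} \<le> card {y \<in> block_vecs m N. k \<le> cnt m N y}"
    unfolding cY cYc of_nat_le_iff .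
  then show ?thesis using tot by linarith
qed



theorem theorem2:
  fixes N m :: nat and \<Delta> K :: real
  assumes "N \<ge> 1" and "m \<ge> 1" and "\<Delta> \<ge> 1" and "K \<ge> 1"
    and "2 ^ m \<le> real N / (K * \<Delta>)"
  shows "\<exists>Y. Y \<subseteq> block_vecs m N \<and> Y \<noteq> {} \<and>
           entropy_deficiency m N Y \<le> \<Delta> \<and>
           min_entropy_rate_at_least m N Y (1 - 1 / real m) \<and>
           (\<forall>I \<subseteq> {..<N}. real (card I) \<le> (K - 1) * \<Delta> \<longrightarrow>
              (\<lambda>_. False) \<notin> IND_set ({..<N} - I) (index_vecs m N) Y)"
proof -
  note N1 = assms(1) and m1 = assms(2) and D1 = assms(3) and K1 = assms(4) and hyp = assms(5)
  define k where "k = nat \<lfloor>(K - 1) * \<Delta>\<rfloor> + 1"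
  define Y where "Y = {y \<in> block_vecs m N. k \<le> cnt m N y}"
  have nn: "(K - 1) * \<Delta> \<ge> 0" using K1 D1 by simp
  have kgt: "real k > (K - 1) * \<Delta>"
    unfolding k_def using nn by (simp add: of_nat_nat) linarith
  have kle: "real k \<le> K * \<Delta>"
  proof -
    have "real k \<le> (K - 1) * \<Delta> + 1" unfolding k_def using nn by (simp add: of_nat_nat)
    also have "\<dots> \<le> K * \<Delta>" using D1 by (simp add: algebra_simps)
    finally show ?thesis .
  qed
  have KDpos: "K * \<Delta> > 0" using K1 D1 by simp
  have "real k * 2 ^ m \<le> K * \<Delta> * (real N / (K * \<Delta>))"
    using kle hyp KDpos by (intro mult_mono) auto
  also have "\<dots> = real N" using D1 K1 by simp
  finally have "real (k * 2 ^ m) \<le> real N" by simp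
  then have kN: "k * 2 ^ m \<le> N" by (simp only: of_nat_le_iff)
  have hc: "2 ^ (m * N) \<le> 2 * card Y" unfolding Y_def by (rule main_count[OF m1 kN])
  have finY: "finite Y" unfolding Y_def using block_card(1) by simp
  have hcr: "2 powr (real (m * N) - 1) \<le> real (card Y)"
  proof -
    have p: "(2::real) powr real (m * N) = 2 ^ (m * N)" by (rule powr_realpow) simp
    have "2 powr (real (m * N) - 1) = 2 ^ (m * N) / 2" unfolding powr_diff p by simp
    also have "\<dots> \<le> real (card Y)"
    proof -
      have "real (2 ^ (m * N)) \<le> real (2 * card Y)" using hc by (simp only: of_nat_le_iff)
      then have "2 ^ (m * N) \<le> 2 * real (card Y)" by simp
      then show ?thesis by linarith
    qed
    finally show ?thesis .
  qed
  have "0 < (2::real) powr (real (m * N) - 1)" by simp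
  then have cYpos: "real (card Y) > 0" using hcr by linarith
  have sub: "Y \<subseteq> block_vecs m N" unfolding Y_def by auto
  have ne: "Y \<noteq> {}" using cYpos by auto
  have def: "entropy_deficiency m N Y \<le> \<Delta>"
  proof -
    have "log 2 (2 powr (real (m * N) - 1)) \<le> log 2 (real (card Y))"
      using hcr cYpos by (subst log_le_cancel_iff) auto
    then have "real (m * N) - 1 \<le> log 2 (real (card Y))" by simp
    then show ?thesis unfolding entropy_deficiency_def using D1 by simp
  qed
  have minent: "min_entropy_rate_at_least m N Y (1 - 1 / real m)"
    unfolding min_entropy_rate_at_least_def
  proof (intro allI impI)
    fix J \<alpha> assume J: "J \<subseteq> {..<N}" and al: "\<forall>i\<in>J. \<alpha> i \<in> bits m"
    define s where "s = card J"
    have sN: "s \<le> N" unfolding s_def using J by (metis card_lessThan card_mono finite_lessThan)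
    have numle: "card {y \<in> Y. \<forall>i\<in>J. y i = \<alpha> i} \<le> 2 ^ (m * (N - s))"
    proof -
      have "card {y \<in> Y. \<forall>i\<in>J. y i = \<alpha> i} \<le> card {y \<in> block_vecs m N. \<forall>i\<in>J. y i = \<alpha> i}"
        by (rule card_mono) (use block_card(1) sub in auto)
      then show ?thesis using fixed_card[OF J al] unfolding s_def by simp
    qed
    have rhs: "(2 ^ m) powr (- (1 - 1 / real m) * real (card J)) = 2 powr (real s - real m * real s)"
    proof -
      have "(2 ^ m :: real) powr (- (1 - 1 / real m) * real (card J)) = 2 powr (real m * (- (1 - 1 / real m) * real s))"
        unfolding s_def by (simp add: powr_realpow[symmetric] powr_powr)
      also have "real m * (- (1 - 1 / real m) * real s) = real s - real m * real s"
        using m1 by (simp add: field_simps)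
      finally show ?thesis .
    qed
    show "real (card {y \<in> Y. \<forall>i\<in>J. y i = \<alpha> i}) / real (card Y) \<le> (2 ^ m) powr (- (1 - 1 / real m) * real (card J))"
    proof (cases "s = 0")
      case True
      have "card {y \<in> Y. \<forall>i\<in>J. y i = \<alpha> i} \<le> card Y" by (rule card_mono[OF finY]) auto
      then have "real (card {y \<in> Y. \<forall>i\<in>J. y i = \<alpha> i}) / real (card Y) \<le> 1"
        using cYpos by (simp add: divide_le_eq_1)
      then show ?thesis unfolding rhs using True by simp
    next
      case False
      have "real (card {y \<in> Y. \<forall>i\<in>J. y i = \<alpha> i}) / real (card Y) \<le> 2 powr (real (m * (N - s))) / 2 powr (real (m * N) - 1)"
      proof (rule frac_le)
        show "real (card {y \<in> Y. \<forall>i\<in>J. y i = \<alpha> i}) \<le> 2 powr (real (m * (N - s)))"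
        proof -
          have p: "(2::real) powr real (m * (N - s)) = 2 ^ (m * (N - s))" by (rule powr_realpow) simp
          have "real (card {y \<in> Y. \<forall>i\<in>J. y i = \<alpha> i}) \<le> real (2 ^ (m * (N - s)))"
            using numle by (simp only: of_nat_le_iff)
          then show ?thesis unfolding p by simp
        qed
      qed (use hcr in auto)
      also have "\<dots> = 2 powr (1 - real m * real s)"
      proof -
        have e: "real (m * (N - s)) - (real (m * N) - 1) = 1 - real m * real s"
          using sN by (simp add: of_nat_diff right_diff_distrib)
        show ?thesis unfolding powr_diff[symmetric] e ..
      qed
      also have "\<dots> \<le> 2 powr (real s - real m * real s)"
        using False by (intro powr_mono) auto
      finally show ?thesis unfolding rhs .
    qed
  qed
  have ind: "\<forall>I \<subseteq> {..<N}. real (card I) \<le> (K - 1) * \<Delta> \<longrightarrow>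
              (\<lambda>_. False) \<notin> IND_set ({..<N} - I) (index_vecs m N) Y"
  proof (intro allI impI notI)
    fix I assume I: "I \<subseteq> {..<N}" and cI: "real (card I) \<le> (K - 1) * \<Delta>"
      and mem: "(\<lambda>_. False) \<in> IND_set ({..<N} - I) (index_vecs m N) Y"
    obtain x y where x: "x \<in> index_vecs m N" and y: "y \<in> Y"
      and eq: "(\<lambda>_. False) = (\<lambda>i. if i \<in> {..<N} - I then IND (x i) (y i) else False)"
      using mem unfolding IND_set_def by blast
    define S where "S = {i. i < N \<and> y i = ones m}"
    have "k \<le> card S" using y unfolding Y_def S_def cnt_def by simp
    then have "card I < card S" using cI kgt by linarith
    then have "\<not> S \<subseteq> I" using I by (meson card_mono finite_lessThan finite_subset leD)
    then obtain i where iS: "i \<in> S" and iI: "i \<notin> I" by blast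
    have iN: "i < N" and yi: "y i = ones m" using iS unfolding S_def by auto
    have "x i < m" using x iN unfolding index_vecs_def by simp
    then have "IND (x i) (y i)" unfolding IND_def yi ones_def .
    moreover have "\<not> IND (x i) (y i)" using fun_cong[OF eq, of i] iN iI by simp
    ultimately show False by simp
  qed
  show ?thesis using sub ne def minent ind by blast
qed

end
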